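(* Let $I$ be an interval with $1\in I\subset\,]0,\infty[$. Let $\lambda,\mu,\tilde\mu\in C^1(I\times\mathbb{R})$ be $1$-periodic in $r$, and let $\psi\in C^1(\mathbb{R})$, $\overset{\circ}{\phi}\in C^2(\mathbb{R})$ be $1$-periodic; write $\overset{\circ}{\lambda}=\lambda(1,\cdot)$, $\overset{\circ}{\mu}=\mu(1,\cdot)$. Define the operators $D^{\pm}=e^{-\mu}\partial_t\pm e^{-\lambda}\partial_r$ and the coefficients $$\tilde a=\Big(-\dot\lambda-\frac1t\Big)e^{-\mu}-\tilde\mu e^{-\lambda},\quad b=-\frac{e^{-\mu}}{t},\quad \tilde c=\Big(-\dot\lambda-\frac1t\Big)e^{-\mu}+\tilde\mu e^{-\lambda}.$$ Let $X,Y\in C^1(I\times\mathbb{R})$ be $1$-periodic in $r$ and solve $$D^+X=\tilde aX+bY,\qquad D^-Y=bX+\tilde cY$$ on $I\times\mathbb{R}$ with $X(1,r)=e^{-\overset{\circ}{\mu}(r)}\psi(r)-e^{-\overset{\circ}{\lambda}(r)}\overset{\circ}{\phi}'(r)$ and $Y(1,r)=e^{-\overset{\circ}{\mu}(r)}\psi(r)+e^{-\overset{\circ}{\lambda}(r)}\overset{\circ}{\phi}'(r)$. Set $$K_0=2\sup_{r\in\mathbb{R}}\big(|\psi(r)|e^{-\overset{\circ}{\mu}(r)}+|\overset{\circ}{\phi}'(r)|e^{-\overset{\circ}{\lambda}(r)}\big),\quad m(t)=\sup_{r\in\mathbb{R}}\Big(|\dot\lambda(t,r)|+\frac2t+|\tilde\mu(t,r)|e^{(\mu-\lambda)(t,r)}\Big),$$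 $$K(t)=\sup_{r\in\mathbb{R}}\big(X^2+Y^2\big)^{1/2}(t,r).$$ Then for $t\in I$ with $t\le1$, $$K(t)\le K_0+3\int_t^1 m(s)K(s)\,ds,$$ and for $t\in I$ with $t\ge1$, $K(t)\le K_0+3\int_1^t m(s)K(s)\,ds$.
   Context: A dot denotes $\partial_t$ and a prime denotes $\partial_r$. The variable $t$ is time and $r$ the spatial variable; all functions of $(t,r)$ are periodic in $r$ with period 1. *)

theory Defs
  imports "HOL-Analysis.Analysis"
begin

definition C1_on :: "(real \<times> real) set \<Rightarrow> (real \<Rightarrow> real \<Rightarrow> real)
    \<Rightarrow> (real \<Rightarrow> real \<Rightarrow> real) \<Rightarrow> (real \<Rightarrow> real \<Rightarrow> real) \<Rightarrow> bool" where
  "C1_on S f ft fr \<longleftrightarrow>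
     (\<forall>p\<in>S. ((\<lambda>q. f (fst q) (snd q)) has_derivative
               (\<lambda>h. ft (fst p) (snd p) * fst h + fr (fst p) (snd p) * snd h)) (at p within S))
     \<and> continuous_on S (\<lambda>q. ft (fst q) (snd q))
     \<and> continuous_on S (\<lambda>q. fr (fst q) (snd q))"

definition periodic_r :: "real set \<Rightarrow> (real \<Rightarrow> real \<Rightarrow> real) \<Rightarrow> bool" where
  "periodic_r I f \<longleftrightarrow> (\<forall>t\<in>I. \<forall>r. f t (r + 1) = f t r)"

end

theory Submission
  imports Defs
begin

lemma periodic_nat:
  fixes f :: "real \<Rightarrow> 'a"
  assumes "\<forall>x. f (x + 1) = f x"
  shows "f (x + real k) = f x"
proof (induction k)
  case (Suc k)
  have "f (x + real (Suc k)) = f ((x + real k) + 1)" by (simp add: algebra_simps)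
  also have "\<dots> = f (x + real k)" using assms by blast
  finally show ?case using Suc by simp
qed simp

lemma periodic_int:
  fixes f :: "real \<Rightarrow> 'a"
  assumes "\<forall>x. f (x + 1) = f x"
  shows "f (x + of_int n) = f x"
proof (cases "n \<ge> 0")
  case True
  then obtain k where "n = int k" by (metis nonneg_eq_int)
  then have "of_int n = real k" by simp
  then show ?thesis using periodic_nat[OF assms, of x k] by metis
next
  case False
  then obtain k where k: "- n = int k" by (metis neg_0_le_iff_le nonneg_eq_int not_le order_less_imp_le)
  then have "of_int (-n) = real k" by simp
  then have "(x + of_int n) + real k = x" by simp
  moreover have "f ((x + of_int n) + real k) = f (x + of_int n)"
    using periodic_nat[OF assms] by blast
  ultimately show ?thesis by metis
qed

lemma periodic_red:
  fixes f :: "real \<Rightarrow> 'a"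
  assumes "\<forall>x. f (x + 1) = f x"
  shows "\<exists>y\<in>{0..1}. f x = f y"
proof
  show "frac x \<in> {0..1}" using frac_lt_1[of x] frac_ge_0[of x] by simp
  have "f (frac x + of_int \<lfloor>x\<rfloor>) = f (frac x)" by (rule periodic_int[OF assms])
  then show "f x = f (frac x)" by (simp add: frac_def)
qed

lemma periodic_bdd:
  fixes f :: "real \<Rightarrow> real"
  assumes "\<forall>x. f (x + 1) = f x" "continuous_on {0..1} f"
  shows "bdd_above (range f)"
proof -
  have "compact (f ` {0..1})" using assms(2) compact_continuous_image by blast
  then have "bdd_above (f ` {0..1})" by (intro bounded_imp_bdd_above compact_imp_bounded)
  moreover have "range f \<subseteq> f ` {0..1}" using periodic_red[OF assms(1)] by blast
  ultimately show ?thesis by (rule bdd_above_mono)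
qed

lemma transport_upper:
  fixes Z Zt Zr :: "real \<Rightarrow> real \<Rightarrow> real" and h :: "real \<Rightarrow> real"
  assumes ab: "a \<le> b"
  and cont: "continuous_on ({a..b} \<times> UNIV) (\<lambda>q. Z (fst q) (snd q))"
  and per: "\<forall>t\<in>{a..b}. \<forall>r. Z t (r+1) = Z t r"
  and dt: "\<forall>t\<in>{a..b}. \<forall>r. ((\<lambda>s. Z s r) has_real_derivative Zt t r) (at t within {a..b})"
  and dr: "\<forall>t\<in>{a..b}. \<forall>r. ((\<lambda>x. Z t x) has_real_derivative Zr t r) (at r)"
  and bnd: "\<forall>t\<in>{a..b}. \<forall>r. Zr t r = 0 \<longrightarrow> - h t \<le> Zt t r"
  and hcont: "continuous_on {a..b} h"
  and init: "\<forall>r. Z b r \<le> B"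
  shows "Z a r \<le> B + integral {a..b} h"
proof (rule ccontr)
  assume neg: "\<not> ?thesis"
  define \<delta> where "\<delta> = Z a r - B - integral {a..b} h"
  have \<delta>pos: "\<delta> > 0" using neg by (simp add: \<delta>_def)
  define \<epsilon> where "\<epsilon> = \<delta> / (1 + (b - a))"
  have \<epsilon>pos: "\<epsilon> > 0" using \<delta>pos ab by (simp add: \<epsilon>_def)
  have \<epsilon>eq: "\<epsilon> + \<epsilon> * (b - a) = \<delta>" proof -
    have "1 + (b - a) > 0" using ab by simp
    then have "\<epsilon> * (1 + (b - a)) = \<delta>" unfolding \<epsilon>_def by simp
    then show ?thesis by (simp add: algebra_simps)
  qed
  define \<Phi> where "\<Phi> = (\<lambda>t. B + \<epsilon> + integral {a..b} h - integral {a..t} h + \<epsilon> * (b - t))"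
  have hint: "h integrable_on {a..b}" using hcont integrable_continuous_real by blast
  have \<Phi>a: "\<Phi> a = Z a r" using \<epsilon>eq by (simp add: \<Phi>_def \<delta>_def)
  have \<Phi>b: "\<Phi> b = B + \<epsilon>" by (simp add: \<Phi>_def)
  have \<Phi>cont: "continuous_on {a..b} \<Phi>"
    unfolding \<Phi>_def
    by (intro continuous_on_add continuous_on_diff continuous_on_const continuous_on_mult
         continuous_on_id indefinite_integral_continuous_1[OF hint])
  have \<Phi>der: "(\<Phi> has_real_derivative (- h t - \<epsilon>)) (at t within {a..b})" if "t \<in> {a..b}" for t
  proof -
    have "((\<lambda>u. integral {a..u} h) has_real_derivative h t) (at t within {a..b})"
      using integral_has_vector_derivative[OF hcont that]
      by (simp add: has_real_derivative_iff_has_vector_derivative)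
    then have "(\<Phi> has_real_derivative (0 - h t + \<epsilon> * (0 - 1))) (at t within {a..b})"
      unfolding \<Phi>_def
      by (intro DERIV_add DERIV_diff DERIV_const DERIV_cmult DERIV_ident) auto
    then show ?thesis by simp
  qed
  have perZ: "\<forall>x. Z t (x + 1) = Z t x" if "t \<in> {a..b}" for t using per that by blast
  define T where "T = {q \<in> {a..b} \<times> {0..1}. \<Phi> (fst q) \<le> Z (fst q) (snd q)}"
  have S1: "continuous_on ({a..b} \<times> {0..1::real}) (\<lambda>q. \<Phi> (fst q))"
    by (rule continuous_on_compose2[OF \<Phi>cont continuous_on_fst]) auto
  have S2: "continuous_on ({a..b} \<times> {0..1::real}) (\<lambda>q. Z (fst q) (snd q))"
    by (rule continuous_on_subset[OF cont]) auto
  have "closed T" unfolding T_def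
    by (rule continuous_on_closed_Collect_le[OF S1 S2]) (simp add: closed_Times)
  moreover have "T \<subseteq> {a..b} \<times> {0..1}" unfolding T_def by blast
  moreover have "compact (({a..b} \<times> {0..1}) \<inter> T)"
    by (rule compact_Int_closed[OF compact_Times[OF compact_Icc compact_Icc] \<open>closed T\<close>])
  ultimately have "compact T" by (simp add: Int_absorb1)
  then have cT: "compact (fst ` T)"
    by (intro compact_continuous_image continuous_intros)
  have aab: "a \<in> {a..b}" using ab by simp
  obtain r0 where r0: "r0 \<in> {0..1}" "Z a r = Z a r0"
    using periodic_red[OF perZ[OF aab]] by blast
  have "(a, r0) \<in> T" using r0 \<Phi>a ab by (simp add: T_def)
  then have "fst ` T \<noteq> {}" by blast
  then obtain ts where ts: "ts \<in> fst ` T" and tsmax: "\<forall>t\<in>fst ` T. t \<le> ts"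
    using compact_attains_sup[OF cT] by blast
  obtain r1 where r1: "r1 \<in> {0..1}" "ts \<in> {a..b}" "\<Phi> ts \<le> Z ts r1"
    using ts unfolding T_def by force
  have "ts \<noteq> b"
  proof
    assume "ts = b"
    then show False using r1 \<Phi>b init[rule_format, of r1] \<epsilon>pos by simp
  qed
  then have tsb: "ts < b" using r1 by simp
  have "continuous_on {0..1} (\<lambda>x. Z ts x)"
    using DERIV_isCont[OF dr[rule_format, OF r1(2)]] by (intro continuous_at_imp_continuous_on) blast
  then obtain rs where rs: "rs \<in> {0..1}" "\<forall>y\<in>{0..1}. Z ts y \<le> Z ts rs"
    using continuous_attains_sup[of "{0..1::real}" "\<lambda>x. Z ts x"] by auto
  have rsmax: "Z ts y \<le> Z ts rs" for y
  proof -
    obtain y' where "y' \<in> {0..1}" "Z ts y = Z ts y'" using periodic_red[OF perZ[OF r1(2)]] by blast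
    then show ?thesis using rs(2) by simp
  qed
  have "Zr ts rs = 0"
    using DERIV_local_max[OF dr[rule_format, OF r1(2)] zero_less_one] rsmax by blast
  then have Zt_ge: "- h ts \<le> Zt ts rs" using bnd r1 by blast
  have "((\<lambda>s. Z s rs - \<Phi> s) has_real_derivative (Zt ts rs - (- h ts - \<epsilon>))) (at ts within {a..b})"
    by (rule DERIV_diff[OF dt[rule_format, OF r1(2)] \<Phi>der[OF r1(2)]])
  moreover have "Zt ts rs - (- h ts - \<epsilon>) > 0" using Zt_ge \<epsilon>pos by simp
  ultimately obtain d where d: "d > 0"
    "\<forall>e>0. ts + e \<in> {a..b} \<longrightarrow> e < d \<longrightarrow> Z ts rs - \<Phi> ts < Z (ts + e) rs - \<Phi> (ts + e)"
    using has_real_derivative_pos_inc_right by blast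
  define e where "e = min (d/2) (b - ts)"
  have e: "e > 0" "ts + e \<in> {a..b}" "e < d" using d tsb r1 by (auto simp: e_def)
  have "Z ts rs - \<Phi> ts \<ge> 0" using r1 rsmax[of r1] by simp
  then have "\<Phi> (ts + e) \<le> Z (ts + e) rs" using d(2)[rule_format, OF e(1) e(2) e(3)] by linarith
  moreover obtain rr where rr: "rr \<in> {0..1}" "Z (ts + e) rs = Z (ts + e) rr"
    using periodic_red[OF perZ[OF e(2)]] by blast
  ultimately have "(ts + e, rr) \<in> T" using e by (simp add: T_def)
  then have "ts + e \<le> ts" using tsmax by force
  then show False using e by simp
qed

lemma transport_abs_back:
  fixes Z Zt Zr :: "real \<Rightarrow> real \<Rightarrow> real" and h :: "real \<Rightarrow> real"
  assumes ab: "a \<le> b"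
  and cont: "continuous_on ({a..b} \<times> UNIV) (\<lambda>q. Z (fst q) (snd q))"
  and per: "\<forall>t\<in>{a..b}. \<forall>r. Z t (r+1) = Z t r"
  and dt: "\<forall>t\<in>{a..b}. \<forall>r. ((\<lambda>s. Z s r) has_real_derivative Zt t r) (at t within {a..b})"
  and dr: "\<forall>t\<in>{a..b}. \<forall>r. ((\<lambda>x. Z t x) has_real_derivative Zr t r) (at r)"
  and bnd: "\<forall>t\<in>{a..b}. \<forall>r. Zr t r = 0 \<longrightarrow> \<bar>Zt t r\<bar> \<le> h t"
  and hcont: "continuous_on {a..b} h"
  and init: "\<forall>r. \<bar>Z b r\<bar> \<le> B"
  shows "\<bar>Z a r\<bar> \<le> B + integral {a..b} h"
proof -
  have "Z a r \<le> B + integral {a..b} h"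
  proof (rule transport_upper[OF ab cont per dt dr _ hcont])
    show "\<forall>t\<in>{a..b}. \<forall>r. Zr t r = 0 \<longrightarrow> - h t \<le> Zt t r"
    proof (intro ballI allI impI)
      fix t r assume "t \<in> {a..b}" "Zr t r = 0"
      then have "\<bar>Zt t r\<bar> \<le> h t" using bnd by blast
      then show "- h t \<le> Zt t r" by linarith
    qed
    show "\<forall>r. Z b r \<le> B" using init abs_le_D1 by blast
  qed
  moreover have "- Z a r \<le> B + integral {a..b} h"
  proof (rule transport_upper[where Z="\<lambda>t r. - Z t r" and Zt="\<lambda>t r. - Zt t r"
        and Zr="\<lambda>t r. - Zr t r", OF ab _ _ _ _ _ hcont])
    show "continuous_on ({a..b} \<times> UNIV) (\<lambda>q. - Z (fst q) (snd q))"
      using cont by (rule continuous_on_minus)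
    show "\<forall>t\<in>{a..b}. \<forall>r. - Z t (r + 1) = - Z t r" using per by simp
    show "\<forall>t\<in>{a..b}. \<forall>r. ((\<lambda>s. - Z s r) has_real_derivative - Zt t r) (at t within {a..b})"
      using dt by (auto intro: DERIV_minus)
    show "\<forall>t\<in>{a..b}. \<forall>r. ((\<lambda>x. - Z t x) has_real_derivative - Zr t r) (at r)"
      using dr by (auto intro: DERIV_minus)
    show "\<forall>t\<in>{a..b}. \<forall>r. - Zr t r = 0 \<longrightarrow> - h t \<le> - Zt t r"
    proof (intro ballI allI impI)
      fix t r assume "t \<in> {a..b}" "- Zr t r = 0"
      then have "\<bar>Zt t r\<bar> \<le> h t" using bnd by simp
      then show "- h t \<le> - Zt t r" by linarith
    qed
    show "\<forall>r. - Z b r \<le> B" using init abs_le_D2 by blast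
  qed
  ultimately show ?thesis by linarith
qed

lemma transport_abs_fwd:
  fixes Z Zt Zr :: "real \<Rightarrow> real \<Rightarrow> real" and h :: "real \<Rightarrow> real"
  assumes ab: "a \<le> b"
  and cont: "continuous_on ({a..b} \<times> UNIV) (\<lambda>q. Z (fst q) (snd q))"
  and per: "\<forall>t\<in>{a..b}. \<forall>r. Z t (r+1) = Z t r"
  and dt: "\<forall>t\<in>{a..b}. \<forall>r. ((\<lambda>s. Z s r) has_real_derivative Zt t r) (at t within {a..b})"
  and dr: "\<forall>t\<in>{a..b}. \<forall>r. ((\<lambda>x. Z t x) has_real_derivative Zr t r) (at r)"
  and bnd: "\<forall>t\<in>{a..b}. \<forall>r. Zr t r = 0 \<longrightarrow> \<bar>Zt t r\<bar> \<le> h t"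
  and hcont: "continuous_on {a..b} h"
  and init: "\<forall>r. \<bar>Z a r\<bar> \<le> B"
  shows "\<bar>Z b r\<bar> \<le> B + integral {a..b} h"
proof -
  have img: "uminus ` {-b..-a} = {a..(b::real)}" by simp
  have mem: "t \<in> {-b..-a} \<longleftrightarrow> - t \<in> {a..b}" for t :: real by auto
  have "\<bar>(\<lambda>t r. Z (-t) r) (-b) r\<bar> \<le> B + integral {-b..-a} (\<lambda>t. h (-t))"
  proof (rule transport_abs_back[where Z="\<lambda>t r. Z (-t) r" and a="-b" and b="-a" and h="\<lambda>t. h (-t)" and Zt="\<lambda>t r. - Zt (-t) r" and Zr="\<lambda>t r. Zr (-t) r"])
    show "- b \<le> - a" using ab by simp
    show "continuous_on ({- b..- a} \<times> UNIV) (\<lambda>q. Z (- fst q) (snd q))"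
    proof -
      have "continuous_on ({-b..-a}\<times>UNIV) (\<lambda>q::real\<times>real. (- fst q, snd q))"
        by (intro continuous_intros)
      moreover have "(\<lambda>q::real\<times>real. (- fst q, snd q)) ` ({-b..-a}\<times>UNIV) \<subseteq> {a..b}\<times>UNIV" by auto
      ultimately have "continuous_on ({-b..-a}\<times>UNIV)
          ((\<lambda>q. Z (fst q) (snd q)) \<circ> (\<lambda>q::real\<times>real. (- fst q, snd q)))"
        using continuous_on_compose continuous_on_subset[OF cont] by blast
      then show ?thesis by (simp add: o_def)
    qed
    show "\<forall>t\<in>{- b..- a}. \<forall>r. Z (- t) (r + 1) = Z (- t) r" using per mem by blast
    show "\<forall>t\<in>{- b..- a}. \<forall>r. ((\<lambda>s. Z (- s) r) has_real_derivative - Zt (- t) r) (at t within {- b..- a})"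
    proof (intro ballI allI)
      fix t r assume t: "t \<in> {-b..-a}"
      have "((\<lambda>s. Z s r) has_real_derivative Zt (-t) r) (at (uminus t) within (uminus ` {-b..-a}))"
        using dt t mem img by auto
      from DERIV_image_chain[OF this DERIV_minus[OF DERIV_ident]]
      show "((\<lambda>s. Z (- s) r) has_real_derivative - Zt (- t) r) (at t within {- b..- a})"
        by (simp add: o_def)
    qed
    show "\<forall>t\<in>{- b..- a}. \<forall>r. ((\<lambda>x. Z (- t) x) has_real_derivative Zr (- t) r) (at r)"
      using dr mem by blast
    show "\<forall>t\<in>{- b..- a}. \<forall>r. Zr (- t) r = 0 \<longrightarrow> \<bar>- Zt (- t) r\<bar> \<le> h (- t)"
      using bnd mem by auto
    show "continuous_on {- b..- a} (\<lambda>t. h (- t))"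
      by (rule continuous_on_compose2[OF hcont]) (auto intro!: continuous_intros)
    show "\<forall>r. \<bar>Z (- (- a)) r\<bar> \<le> B" using init by simp
  qed
  then show ?thesis by simp
qed

lemma periodic_frac:
  fixes f :: "real \<Rightarrow> 'a"
  assumes "\<forall>x. f (x + 1) = f x"
  shows "f x = f (frac x)"
proof -
  have "f (frac x + of_int \<lfloor>x\<rfloor>) = f (frac x)" by (rule periodic_int[OF assms])
  then show ?thesis by (simp add: frac_def)
qed

lemma frac_01: "frac x \<in> {0..1}"
  using frac_lt_1[of x] frac_ge_0[of x] by simp

lemma sup_cont:
  fixes F :: "real \<Rightarrow> real \<Rightarrow> real"
  assumes cont: "continuous_on ({a..b} \<times> UNIV) (\<lambda>q. F (fst q) (snd q))"
  and per: "\<forall>t\<in>{a..b}. \<forall>r. F t (r+1) = F t r"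
  shows "\<forall>t\<in>{a..b}. bdd_above (range (F t))"
    and "continuous_on {a..b} (\<lambda>t. SUP r. F t r)"
proof -
  have contt: "continuous_on {0..1} (F t)" if "t \<in> {a..b}" for t
  proof -
    have "continuous_on {0..1} ((\<lambda>q. F (fst q) (snd q)) \<circ> (\<lambda>r. (t, r)))"
      by (rule continuous_on_compose[OF _ continuous_on_subset[OF cont]])
         (use that in \<open>auto intro!: continuous_intros\<close>)
    then show ?thesis by (simp add: o_def)
  qed
  show bdd: "\<forall>t\<in>{a..b}. bdd_above (range (F t))"
  proof
    fix t assume t: "t \<in> {a..b}"
    show "bdd_above (range (F t))"
      by (rule periodic_bdd) (use per t contt[OF t] in auto)
  qed
  have uc: "uniformly_continuous_on ({a..b} \<times> {0..1}) (\<lambda>q. F (fst q) (snd q))"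
    by (rule compact_uniformly_continuous[OF continuous_on_subset[OF cont]])
       (auto intro: compact_Times)
  show "continuous_on {a..b} (\<lambda>t. SUP r. F t r)"
    unfolding continuous_on_iff
  proof (intro ballI allI impI)
    fix t e :: real assume t: "t \<in> {a..b}" and e: "e > 0"
    obtain d where d: "d > 0" and
      dd: "\<forall>x\<in>{a..b} \<times> {0..1}. \<forall>x'\<in>{a..b} \<times> {0..1}. dist x' x < d \<longrightarrow>
            dist (F (fst x') (snd x')) (F (fst x) (snd x)) < e/2"
      using uc e unfolding uniformly_continuous_on_def by (meson half_gt_zero)
    show "\<exists>d>0. \<forall>x'\<in>{a..b}. dist x' t < d \<longrightarrow> dist (SUP r. F x' r) (SUP r. F t r) < e"
    proof (intro exI[of _ d] conjI ballI impI)
      show "d > 0" by fact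
      fix t' assume t': "t' \<in> {a..b}" and dt: "dist t' t < d"
      have close: "\<bar>F t' r - F t r\<bar> < e/2" if "r \<in> {0..1}" for r
      proof -
        have "dist (t', r) (t, r) < d" using dt by (simp add: dist_Pair_Pair)
        then show ?thesis using dd t t' that by (fastforce simp: dist_real_def)
      qed
      have s1: "(SUP r. F t' r) \<le> (SUP r. F t r) + e/2"
      proof (rule cSUP_least)
        fix r
        have "F t' r = F t' (frac r)" using periodic_frac per t' by blast
        also have "\<dots> \<le> F t (frac r) + e/2" using close[OF frac_01[of r]] by linarith
        also have "F t (frac r) \<le> (SUP r. F t r)" using bdd t by (intro cSUP_upper) auto
        finally show "F t' r \<le> (SUP r. F t r) + e/2" by linarith
      qed simp
      have s2: "(SUP r. F t r) \<le> (SUP r. F t' r) + e/2"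
      proof (rule cSUP_least)
        fix r
        have "F t r = F t (frac r)" using periodic_frac per t by blast
        also have "\<dots> \<le> F t' (frac r) + e/2" using close[OF frac_01[of r]] by linarith
        also have "F t' (frac r) \<le> (SUP r. F t' r)" using bdd t' by (intro cSUP_upper) auto
        finally show "F t r \<le> (SUP r. F t' r) + e/2" by linarith
      qed simp
      show "dist (SUP r. F t' r) (SUP r. F t r) < e"
        using s1 s2 e by (simp add: dist_real_def abs_less_iff)
    qed
  qed
qed

lemma C1_cont:
  assumes "C1_on S F Ft Fr"
  shows "continuous_on S (\<lambda>q. F (fst q) (snd q))"
  using assms unfolding C1_on_def by (intro has_derivative_continuous_on) blast

lemma C1_dt:
  assumes C: "C1_on (I \<times> UNIV) F Ft Fr" and sub: "{a..b} \<subseteq> I" and t: "t \<in> {a..b}"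
  shows "((\<lambda>s. F s r) has_real_derivative Ft t r) (at t within {a..b})"
proof -
  have D: "((\<lambda>q. F (fst q) (snd q)) has_derivative (\<lambda>h. Ft t r * fst h + Fr t r * snd h))
      (at (t, r) within I \<times> UNIV)"
    using C t sub unfolding C1_on_def by fastforce
  have g: "((\<lambda>s. (s, r)) has_derivative (\<lambda>h. (h, 0))) (at t within {a..b})"
    by (auto intro!: derivative_eq_intros)
  have "(\<lambda>s. (s, r)) ` {a..b} \<subseteq> I \<times> UNIV" using sub by auto
  from diff_chain_within[OF g has_derivative_subset[OF D this]]
  have "((\<lambda>s. F s r) has_derivative (\<lambda>h. Ft t r * h)) (at t within {a..b})"
    by (simp add: o_def)
  then show ?thesis unfolding has_field_derivative_def by (simp add: mult.commute[of _ "h"] )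
qed

lemma C1_dr:
  assumes C: "C1_on (I \<times> UNIV) F Ft Fr" and t: "t \<in> I"
  shows "((\<lambda>x. F t x) has_real_derivative Fr t r) (at r)"
proof -
  have D: "((\<lambda>q. F (fst q) (snd q)) has_derivative (\<lambda>h. Ft t r * fst h + Fr t r * snd h))
      (at (t, r) within I \<times> UNIV)"
    using C t unfolding C1_on_def by fastforce
  have g: "((\<lambda>x. (t, x)) has_derivative (\<lambda>h. (0, h))) (at r within UNIV)"
    by (auto intro!: derivative_eq_intros)
  have "(\<lambda>x. (t, x)) ` UNIV \<subseteq> I \<times> UNIV" using t by auto
  from diff_chain_within[OF g has_derivative_subset[OF D this]]
  have "((\<lambda>x. F t x) has_derivative (\<lambda>h. Fr t r * h)) (at r)"
    by (simp add: o_def)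
  then show ?thesis unfolding has_field_derivative_def by (simp add: mult.commute[of _ "h"] )
qed

lemma deriv_per:
  assumes C: "C1_on (I \<times> UNIV) F Ft Fr" and P: "periodic_r I F"
    and sub: "{a..b} \<subseteq> I" and ab: "a < b" and t: "t \<in> {a..b}"
  shows "Ft t (r + 1) = Ft t r"
proof -
  have d1: "((\<lambda>s. F s (r+1)) has_real_derivative Ft t (r+1)) (at t within {a..b})"
    by (rule C1_dt[OF C sub t])
  have d2: "((\<lambda>s. F s r) has_real_derivative Ft t r) (at t within {a..b})"
    by (rule C1_dt[OF C sub t])
  have d1': "((\<lambda>s. F s r) has_real_derivative Ft t (r+1)) (at t within {a..b})"
    by (rule has_field_derivative_transform_within[OF d1 zero_less_one t])
       (use P sub in \<open>auto simp: periodic_r_def\<close>)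
  show ?thesis
    using vector_derivative_unique_within_closed_interval[OF ab, of t "\<lambda>s. F s r"] t d1' d2
    by (simp add: cbox_interval has_real_derivative_iff_has_vector_derivative)
qed

lemma keyX:
  fixes t mu la lt mt x y xt k :: real
  assumes t: "t > 0"
    and eq: "exp (- mu) * xt + exp (- la) * 0
               = ((- lt - 1 / t) * exp (- mu) - mt * exp (- la)) * x + (- exp (- mu) / t) * y"
    and kx: "\<bar>x\<bar> \<le> k" and ky: "\<bar>y\<bar> \<le> k"
  shows "\<bar>xt\<bar> \<le> (\<bar>lt\<bar> + 2 / t + \<bar>mt\<bar> * exp (mu - la)) * k"
proof -
  define E where "E = exp (mu - la)"
  have E0: "E > 0" by (simp add: E_def)
  have "exp mu * (exp (- mu) * xt) = exp mu * (((- lt - 1 / t) * exp (- mu) - mt * exp (- la)) * x + (- exp (- mu) / t) * y)"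
    using eq by simp
  moreover have "exp mu * exp (- mu) = 1" by (simp add: exp_minus)
  moreover have "exp mu * exp (- la) = E" by (simp add: E_def exp_diff exp_minus field_simps)
  ultimately have xt: "xt = (- lt - 1 / t) * x - mt * E * x - y / t"
    by (simp add: algebra_simps)
  have "\<bar>xt\<bar> \<le> \<bar>lt\<bar> * \<bar>x\<bar> + (1/t) * \<bar>x\<bar> + \<bar>mt\<bar> * E * \<bar>x\<bar> + (1/t) * \<bar>y\<bar>"
  proof -
    have a1: "\<bar>(- lt - 1 / t) * x\<bar> \<le> \<bar>lt\<bar> * \<bar>x\<bar> + (1/t) * \<bar>x\<bar>"
    proof -
      have "1/t > 0" using t by simp
      then have "\<bar>- lt - 1 / t\<bar> \<le> \<bar>lt\<bar> + 1/t" by linarith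
      then have "\<bar>- lt - 1 / t\<bar> * \<bar>x\<bar> \<le> (\<bar>lt\<bar> + 1/t) * \<bar>x\<bar>" by (rule mult_right_mono) simp
      then show ?thesis by (simp add: abs_mult distrib_right)
    qed
    have a2: "\<bar>mt * E * x\<bar> = \<bar>mt\<bar> * E * \<bar>x\<bar>" using E0 by (simp add: abs_mult)
    have a3: "\<bar>y / t\<bar> = (1/t) * \<bar>y\<bar>" using t by simp
    have "\<bar>xt\<bar> \<le> \<bar>(- lt - 1 / t) * x\<bar> + \<bar>mt * E * x\<bar> + \<bar>y / t\<bar>"
      unfolding xt by linarith
    then show ?thesis using a1 a2 a3 by linarith
  qed
  also have "\<dots> \<le> \<bar>lt\<bar> * k + (1/t) * k + \<bar>mt\<bar> * E * k + (1/t) * k"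
    using kx ky t E0
    by (intro add_mono mult_left_mono) auto
  also have "\<dots> = (\<bar>lt\<bar> + 2 / t + \<bar>mt\<bar> * exp (mu - la)) * k"
    by (simp add: E_def algebra_simps)
  finally show ?thesis .
qed

lemma keyY:
  fixes t mu la lt mt x y yt k :: real
  assumes t: "t > 0"
    and eq: "exp (- mu) * yt - exp (- la) * 0
               = (- exp (- mu) / t) * x + ((- lt - 1 / t) * exp (- mu) + mt * exp (- la)) * y"
    and kx: "\<bar>x\<bar> \<le> k" and ky: "\<bar>y\<bar> \<le> k"
  shows "\<bar>yt\<bar> \<le> (\<bar>lt\<bar> + 2 / t + \<bar>mt\<bar> * exp (mu - la)) * k"
proof -
  have "exp (- mu) * yt + exp (- la) * 0
               = ((- lt - 1 / t) * exp (- mu) - (- mt) * exp (- la)) * y + (- exp (- mu) / t) * x"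
    using eq by (simp add: algebra_simps)
  from keyX[OF t this ky kx] show ?thesis by simp
qed

theorem proposition2p3:
  fixes I :: "real set"
    and lam lam_t lam_r mu mu_t mu_r mut mut_t mut_r :: "real \<Rightarrow> real \<Rightarrow> real"
    and X X_t X_r Y Y_t Y_r :: "real \<Rightarrow> real \<Rightarrow> real"
    and psi psi' phi phi' phi'' :: "real \<Rightarrow> real"
  assumes I_int: "is_interval I" and I_one: "1 \<in> I" and I_pos: "I \<subseteq> {0<..}"
    and lam_C1: "C1_on (I \<times> UNIV) lam lam_t lam_r" and lam_per: "periodic_r I lam"
    and mu_C1: "C1_on (I \<times> UNIV) mu mu_t mu_r" and mu_per: "periodic_r I mu"
    and mut_C1: "C1_on (I \<times> UNIV) mut mut_t mut_r" and mut_per: "periodic_r I mut"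
    and psi_C1: "\<forall>r. (psi has_real_derivative psi' r) (at r)" "continuous_on UNIV psi'"
    and psi_per: "\<forall>r. psi (r + 1) = psi r"
    and phi_C2: "\<forall>r. (phi has_real_derivative phi' r) (at r)"
                "\<forall>r. (phi' has_real_derivative phi'' r) (at r)" "continuous_on UNIV phi''"
    and phi_per: "\<forall>r. phi (r + 1) = phi r"
    and X_C1: "C1_on (I \<times> UNIV) X X_t X_r" and X_per: "periodic_r I X"
    and Y_C1: "C1_on (I \<times> UNIV) Y Y_t Y_r" and Y_per: "periodic_r I Y"
    and eqX: "\<forall>t\<in>I. \<forall>r. exp (- mu t r) * X_t t r + exp (- lam t r) * X_r t r
               = ((- lam_t t r - 1 / t) * exp (- mu t r) - mut t r * exp (- lam t r)) * X t r
                 + (- exp (- mu t r) / t) * Y t r"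
    and eqY: "\<forall>t\<in>I. \<forall>r. exp (- mu t r) * Y_t t r - exp (- lam t r) * Y_r t r
               = (- exp (- mu t r) / t) * X t r
                 + ((- lam_t t r - 1 / t) * exp (- mu t r) + mut t r * exp (- lam t r)) * Y t r"
    and X_init: "\<forall>r. X 1 r = exp (- mu 1 r) * psi r - exp (- lam 1 r) * phi' r"
    and Y_init: "\<forall>r. Y 1 r = exp (- mu 1 r) * psi r + exp (- lam 1 r) * phi' r"
  shows "\<forall>t\<in>I.
      (t \<le> 1 \<longrightarrow>
        (SUP r. sqrt ((X t r)\<^sup>2 + (Y t r)\<^sup>2))
          \<le> 2 * (SUP r. \<bar>psi r\<bar> * exp (- mu 1 r) + \<bar>phi' r\<bar> * exp (- lam 1 r))
            + 3 * integral {t..1} (\<lambda>s. (SUP r. \<bar>lam_t s r\<bar> + 2 / s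
                                              + \<bar>mut s r\<bar> * exp (mu s r - lam s r))
                                       * (SUP r. sqrt ((X s r)\<^sup>2 + (Y s r)\<^sup>2))))
    \<and> (1 \<le> t \<longrightarrow>
        (SUP r. sqrt ((X t r)\<^sup>2 + (Y t r)\<^sup>2))
          \<le> 2 * (SUP r. \<bar>psi r\<bar> * exp (- mu 1 r) + \<bar>phi' r\<bar> * exp (- lam 1 r))
            + 3 * integral {1..t} (\<lambda>s. (SUP r. \<bar>lam_t s r\<bar> + 2 / s
                                              + \<bar>mut s r\<bar> * exp (mu s r - lam s r))
                                       * (SUP r. sqrt ((X s r)\<^sup>2 + (Y s r)\<^sup>2))))"
proof -
  define G where "G = (\<lambda>r. \<bar>psi r\<bar> * exp (- mu 1 r) + \<bar>phi' r\<bar> * exp (- lam 1 r))"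
  define A0 where "A0 = (SUP r. G r)"
  define M where "M = (\<lambda>s r. \<bar>lam_t s r\<bar> + 2 / s + \<bar>mut s r\<bar> * exp (mu s r - lam s r))"
  define Kf where "Kf = (\<lambda>s r. sqrt ((X s r)\<^sup>2 + (Y s r)\<^sup>2))"
  define m where "m = (\<lambda>s. SUP r. M s r)"
  define K where "K = (\<lambda>s. SUP r. Kf s r)"
  define h where "h = (\<lambda>s. m s * K s)"
  have sub: "{a..b} \<subseteq> I" if "a \<in> I" "b \<in> I" for a b
  proof
    fix x assume "x \<in> {a..b}"
    then show "x \<in> I" using mem_is_interval_1_I[OF I_int that(1) that(2)] by simp
  qed
  have tpos: "t > 0" if "t \<in> I" for t using I_pos that by auto
  have Zfac: "continuous_on ({a..b} \<times> UNIV) (\<lambda>q. Z (fst q) (snd q))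
     \<and> (\<forall>t\<in>{a..b}. \<forall>r. Z t (r+1) = Z t r)
     \<and> (\<forall>t\<in>{a..b}. \<forall>r. ((\<lambda>s. Z s r) has_real_derivative Zt t r) (at t within {a..b}))
     \<and> (\<forall>t\<in>{a..b}. \<forall>r. ((\<lambda>x. Z t x) has_real_derivative Zr t r) (at r))"
    if C: "C1_on (I \<times> UNIV) Z Zt Zr" and P: "periodic_r I Z" and ab: "{a..b} \<subseteq> I"
    for Z Zt Zr :: "real \<Rightarrow> real \<Rightarrow> real" and a b
  proof (intro conjI)
    show "continuous_on ({a..b} \<times> UNIV) (\<lambda>q. Z (fst q) (snd q))"
      by (rule continuous_on_subset[OF C1_cont[OF C]]) (use ab in auto)
    show "\<forall>t\<in>{a..b}. \<forall>r. Z t (r+1) = Z t r" using P ab unfolding periodic_r_def by blast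
    show "\<forall>t\<in>{a..b}. \<forall>r. ((\<lambda>s. Z s r) has_real_derivative Zt t r) (at t within {a..b})"
      using C1_dt[OF C ab] by blast
    show "\<forall>t\<in>{a..b}. \<forall>r. ((\<lambda>x. Z t x) has_real_derivative Zr t r) (at r)"
      using C1_dr[OF C] ab by blast
  qed
  have phi'per: "phi' (r + 1) = phi' r" for r
  proof -
    have "((\<lambda>x. phi (x + 1)) has_real_derivative phi' (r+1)) (at r)"
      using phi_C2(1) DERIV_shift by blast
    moreover have "(\<lambda>x. phi (x + 1)) = phi" using phi_per by auto
    ultimately have "(phi has_real_derivative phi' (r+1)) (at r)" by simp
    then show ?thesis using phi_C2(1) DERIV_unique by blast
  qed
  have Gper: "\<forall>r. G (r + 1) = G r"
    using psi_per phi'per mu_per lam_per I_one unfolding G_def periodic_r_def by simp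
  have Gcont: "continuous_on {0..1} G"
  proof (intro continuous_at_imp_continuous_on ballI)
    fix r
    have c1: "isCont psi r" using psi_C1(1) DERIV_isCont by blast
    have c2: "isCont phi' r" using phi_C2(2) DERIV_isCont by blast
    have c3: "isCont (mu 1) r" using C1_dr[OF mu_C1 I_one] DERIV_isCont by blast
    have c4: "isCont (lam 1) r" using C1_dr[OF lam_C1 I_one] DERIV_isCont by blast
    show "isCont G r" unfolding G_def
      by (intro continuous_intros c1 c2 c3 c4)
  qed
  have Gbdd: "bdd_above (range G)" by (rule periodic_bdd[OF Gper Gcont])
  have init: "\<forall>r. \<bar>X 1 r\<bar> \<le> A0 \<and> \<bar>Y 1 r\<bar> \<le> A0"
  proof
    fix r
    have "G r \<le> A0" unfolding A0_def using Gbdd by (intro cSUP_upper) auto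
    moreover have "\<bar>X 1 r\<bar> \<le> G r"
    proof -
      have "\<bar>X 1 r\<bar> \<le> \<bar>exp (- mu 1 r) * psi r\<bar> + \<bar>exp (- lam 1 r) * phi' r\<bar>"
        unfolding X_init[rule_format] by (rule abs_triangle_ineq4)
      also have "\<dots> = G r" unfolding G_def by (simp add: abs_mult mult.commute)
      finally show ?thesis .
    qed
    moreover have "\<bar>Y 1 r\<bar> \<le> G r"
    proof -
      have "\<bar>Y 1 r\<bar> \<le> \<bar>exp (- mu 1 r) * psi r\<bar> + \<bar>exp (- lam 1 r) * phi' r\<bar>"
        unfolding Y_init[rule_format] by (rule abs_triangle_ineq)
      also have "\<dots> = G r" unfolding G_def by (simp add: abs_mult mult.commute)
      finally show ?thesis .
    qed
    ultimately show "\<bar>X 1 r\<bar> \<le> A0 \<and> \<bar>Y 1 r\<bar> \<le> A0" by linarith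
  qed
  have fin: "K t0 \<le> 2 * C" if "\<forall>r. \<bar>X t0 r\<bar> \<le> C \<and> \<bar>Y t0 r\<bar> \<le> C" for t0 C
    unfolding K_def
  proof (rule cSUP_least)
    fix r
    have "Kf t0 r \<le> \<bar>X t0 r\<bar> + \<bar>Y t0 r\<bar>" unfolding Kf_def by (rule sqrt_sum_squares_le_sum_abs)
    moreover have "\<bar>X t0 r\<bar> \<le> C" "\<bar>Y t0 r\<bar> \<le> C" using that by blast+
    ultimately show "Kf t0 r \<le> 2 * C" by linarith
  qed simp
  have gen: "continuous_on {a..b} h \<and> (\<forall>t\<in>{a..b}. 0 \<le> h t)
     \<and> (\<forall>t\<in>{a..b}. \<forall>r. X_r t r = 0 \<longrightarrow> \<bar>X_t t r\<bar> \<le> h t)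
     \<and> (\<forall>t\<in>{a..b}. \<forall>r. Y_r t r = 0 \<longrightarrow> \<bar>Y_t t r\<bar> \<le> h t)"
    if aI: "a \<in> I" and bI: "b \<in> I" and ab: "a < b" for a b
  proof -
    have sab: "{a..b} \<subseteq> I" by (rule sub[OF aI bI])
    have S: "{a..b} \<times> (UNIV::real set) \<subseteq> I \<times> UNIV" using sab by auto
    have tp: "t > 0" if "t \<in> {a..b}" for t using tpos sab that by blast
    have c_lt: "continuous_on ({a..b} \<times> UNIV) (\<lambda>q. lam_t (fst q) (snd q))"
      using lam_C1 unfolding C1_on_def using continuous_on_subset[OF _ S] by blast
    have c_mut: "continuous_on ({a..b} \<times> UNIV) (\<lambda>q. mut (fst q) (snd q))"
      using continuous_on_subset[OF C1_cont[OF mut_C1] S] .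
    have c_mu: "continuous_on ({a..b} \<times> UNIV) (\<lambda>q. mu (fst q) (snd q))"
      using continuous_on_subset[OF C1_cont[OF mu_C1] S] .
    have c_lam: "continuous_on ({a..b} \<times> UNIV) (\<lambda>q. lam (fst q) (snd q))"
      using continuous_on_subset[OF C1_cont[OF lam_C1] S] .
    have c_X: "continuous_on ({a..b} \<times> UNIV) (\<lambda>q. X (fst q) (snd q))"
      using continuous_on_subset[OF C1_cont[OF X_C1] S] .
    have c_Y: "continuous_on ({a..b} \<times> UNIV) (\<lambda>q. Y (fst q) (snd q))"
      using continuous_on_subset[OF C1_cont[OF Y_C1] S] .
    have Mcont: "continuous_on ({a..b} \<times> UNIV) (\<lambda>q. M (fst q) (snd q))"
      unfolding M_def
      by (intro continuous_intros c_lt c_mut c_mu c_lam) (use tp in force)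
    have Mper: "\<forall>t\<in>{a..b}. \<forall>r. M t (r+1) = M t r"
    proof (intro ballI allI)
      fix t r assume t: "t \<in> {a..b}"
      have tI: "t \<in> I" using t sab by blast
      show "M t (r+1) = M t r"
        using deriv_per[OF lam_C1 lam_per sab ab t] mut_per mu_per lam_per tI
        unfolding M_def periodic_r_def by simp
    qed
    have Kfcont: "continuous_on ({a..b} \<times> UNIV) (\<lambda>q. Kf (fst q) (snd q))"
      unfolding Kf_def by (intro continuous_intros c_X c_Y)
    have Kfper: "\<forall>t\<in>{a..b}. \<forall>r. Kf t (r+1) = Kf t r"
      using X_per Y_per sab unfolding Kf_def periodic_r_def by auto
    note mS = sup_cont[OF Mcont Mper] and KS = sup_cont[OF Kfcont Kfper]
    have hc: "continuous_on {a..b} h"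
      unfolding h_def m_def K_def by (intro continuous_on_mult mS(2) KS(2))
    have Mnn: "0 \<le> M t r" if "t \<in> {a..b}" for t r
      using tp[OF that] unfolding M_def by simp
    have Kfnn: "0 \<le> Kf t r" for t r unfolding Kf_def by simp
    have Mle: "M t r \<le> m t" if "t \<in> {a..b}" for t r
      unfolding m_def using mS(1) that by (intro cSUP_upper) auto
    have Kle: "Kf t r \<le> K t" if "t \<in> {a..b}" for t r
      unfolding K_def using KS(1) that by (intro cSUP_upper) auto
    have Knn: "0 \<le> K t" if "t \<in> {a..b}" for t using Kle[OF that, of 0] Kfnn[of t 0] by linarith
    have mnn: "0 \<le> m t" if "t \<in> {a..b}" for t using Mle[OF that, of 0] Mnn[OF that, of 0] by linarith
    have hnn: "\<forall>t\<in>{a..b}. 0 \<le> h t" unfolding h_def using Knn mnn by simp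
    have XK: "\<bar>X t r\<bar> \<le> K t" "\<bar>Y t r\<bar> \<le> K t" if "t \<in> {a..b}" for t r
    proof -
      have "\<bar>X t r\<bar> = sqrt ((X t r)\<^sup>2)" by simp
      also have "\<dots> \<le> Kf t r" unfolding Kf_def by (intro real_sqrt_le_mono) simp
      finally show "\<bar>X t r\<bar> \<le> K t" using Kle[OF that, of r] by linarith
      have "\<bar>Y t r\<bar> = sqrt ((Y t r)\<^sup>2)" by simp
      also have "\<dots> \<le> Kf t r" unfolding Kf_def by (intro real_sqrt_le_mono) simp
      finally show "\<bar>Y t r\<bar> \<le> K t" using Kle[OF that, of r] by linarith
    qed
    have fromM: "\<bar>z\<bar> \<le> h t" if "t \<in> {a..b}" "\<bar>z\<bar> \<le> M t r * K t" for t r z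
    proof -
      have "M t r * K t \<le> m t * K t" using Mle[OF that(1)] Knn[OF that(1)] by (rule mult_right_mono)
      then show ?thesis using that(2) unfolding h_def by simp
    qed
    have bX: "\<forall>t\<in>{a..b}. \<forall>r. X_r t r = 0 \<longrightarrow> \<bar>X_t t r\<bar> \<le> h t"
    proof (intro ballI allI impI)
      fix t r assume t: "t \<in> {a..b}" and Xr0: "X_r t r = 0"
      have tI: "t \<in> I" using t sab by blast
      have e: "exp (- mu t r) * X_t t r + exp (- lam t r) * X_r t r
               = ((- lam_t t r - 1 / t) * exp (- mu t r) - mut t r * exp (- lam t r)) * X t r
                 + (- exp (- mu t r) / t) * Y t r" using eqX tI by blast
      then have e0: "exp (- mu t r) * X_t t r + exp (- lam t r) * 0
               = ((- lam_t t r - 1 / t) * exp (- mu t r) - mut t r * exp (- lam t r)) * X t r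
                 + (- exp (- mu t r) / t) * Y t r" unfolding Xr0 .
      have "\<bar>X_t t r\<bar> \<le> M t r * K t"
        unfolding M_def using keyX[OF tp[OF t] e0 XK[OF t]] by simp
      then show "\<bar>X_t t r\<bar> \<le> h t" by (rule fromM[OF t])
    qed
    have bY: "\<forall>t\<in>{a..b}. \<forall>r. Y_r t r = 0 \<longrightarrow> \<bar>Y_t t r\<bar> \<le> h t"
    proof (intro ballI allI impI)
      fix t r assume t: "t \<in> {a..b}" and Yr0: "Y_r t r = 0"
      have tI: "t \<in> I" using t sab by blast
      have e: "exp (- mu t r) * Y_t t r - exp (- lam t r) * Y_r t r
               = (- exp (- mu t r) / t) * X t r
                 + ((- lam_t t r - 1 / t) * exp (- mu t r) + mut t r * exp (- lam t r)) * Y t r"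
        using eqY tI by blast
      then have e0: "exp (- mu t r) * Y_t t r - exp (- lam t r) * 0
               = (- exp (- mu t r) / t) * X t r
                 + ((- lam_t t r - 1 / t) * exp (- mu t r) + mut t r * exp (- lam t r)) * Y t r"
        unfolding Yr0 .
      have "\<bar>Y_t t r\<bar> \<le> M t r * K t"
        unfolding M_def using keyY[OF tp[OF t] e0 XK[OF t]] by simp
      then show "\<bar>Y_t t r\<bar> \<le> h t" by (rule fromM[OF t])
    qed
    show ?thesis using hc hnn bX bY by blast
  qed
  have main: "\<forall>t\<in>I. (t \<le> 1 \<longrightarrow> K t \<le> 2 * A0 + 3 * integral {t..1} h)
                    \<and> (1 \<le> t \<longrightarrow> K t \<le> 2 * A0 + 3 * integral {1..t} h)"
  proof (intro ballI conjI impI)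
    fix t assume tI: "t \<in> I"
    have K1: "K 1 \<le> 2 * A0" using fin init by blast
    show "K t \<le> 2 * A0 + 3 * integral {t..1} h" if t1: "t \<le> 1"
    proof (cases "t = 1")
      case True then show ?thesis using K1 by simp
    next
      case False
      then have lt: "t < 1" using t1 by simp
      have sab: "{t..1} \<subseteq> I" by (rule sub[OF tI I_one])
      obtain hc hnn bX bY where G: "continuous_on {t..1} h" "\<forall>s\<in>{t..1}. 0 \<le> h s"
        "\<forall>s\<in>{t..1}. \<forall>r. X_r s r = 0 \<longrightarrow> \<bar>X_t s r\<bar> \<le> h s"
        "\<forall>s\<in>{t..1}. \<forall>r. Y_r s r = 0 \<longrightarrow> \<bar>Y_t s r\<bar> \<le> h s"
        using gen[OF tI I_one lt] by blast
      note ZX = Zfac[OF X_C1 X_per sab] and ZY = Zfac[OF Y_C1 Y_per sab]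
      have "\<forall>r. \<bar>X t r\<bar> \<le> A0 + integral {t..1} h \<and> \<bar>Y t r\<bar> \<le> A0 + integral {t..1} h"
      proof
        fix r
        show "\<bar>X t r\<bar> \<le> A0 + integral {t..1} h \<and> \<bar>Y t r\<bar> \<le> A0 + integral {t..1} h"
        proof
          show "\<bar>X t r\<bar> \<le> A0 + integral {t..1} h"
            using transport_abs_back[of t 1 X X_t X_r h A0 r] ZX G init t1 by blast
          show "\<bar>Y t r\<bar> \<le> A0 + integral {t..1} h"
            using transport_abs_back[of t 1 Y Y_t Y_r h A0 r] ZY G init t1 by blast
        qed
      qed
      then have "K t \<le> 2 * (A0 + integral {t..1} h)" by (rule fin)
      moreover have "0 \<le> integral {t..1} h"
        using G(1,2) integrable_continuous_real by (intro integral_nonneg) auto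
      moreover have "2 * (A0 + integral {t..1} h) = 2 * A0 + 2 * integral {t..1} h"
        by (simp add: distrib_left)
      ultimately show ?thesis by linarith
    qed
    show "K t \<le> 2 * A0 + 3 * integral {1..t} h" if t1: "1 \<le> t"
    proof (cases "t = 1")
      case True then show ?thesis using K1 by simp
    next
      case False
      then have lt: "1 < t" using t1 by simp
      have sab: "{1..t} \<subseteq> I" by (rule sub[OF I_one tI])
      obtain hc hnn bX bY where G: "continuous_on {1..t} h" "\<forall>s\<in>{1..t}. 0 \<le> h s"
        "\<forall>s\<in>{1..t}. \<forall>r. X_r s r = 0 \<longrightarrow> \<bar>X_t s r\<bar> \<le> h s"
        "\<forall>s\<in>{1..t}. \<forall>r. Y_r s r = 0 \<longrightarrow> \<bar>Y_t s r\<bar> \<le> h s"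
        using gen[OF I_one tI lt] by blast
      note ZX = Zfac[OF X_C1 X_per sab] and ZY = Zfac[OF Y_C1 Y_per sab]
      have "\<forall>r. \<bar>X t r\<bar> \<le> A0 + integral {1..t} h \<and> \<bar>Y t r\<bar> \<le> A0 + integral {1..t} h"
      proof
        fix r
        show "\<bar>X t r\<bar> \<le> A0 + integral {1..t} h \<and> \<bar>Y t r\<bar> \<le> A0 + integral {1..t} h"
        proof
          show "\<bar>X t r\<bar> \<le> A0 + integral {1..t} h"
            using transport_abs_fwd[of 1 t X X_t X_r h A0 r] ZX G init t1 by blast
          show "\<bar>Y t r\<bar> \<le> A0 + integral {1..t} h"
            using transport_abs_fwd[of 1 t Y Y_t Y_r h A0 r] ZY G init t1 by blast
        qed
      qed
      then have "K t \<le> 2 * (A0 + integral {1..t} h)" by (rule fin)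
      moreover have "0 \<le> integral {1..t} h"
        using G(1,2) integrable_continuous_real by (intro integral_nonneg) auto
      moreover have "2 * (A0 + integral {1..t} h) = 2 * A0 + 2 * integral {1..t} h"
        by (simp add: distrib_left)
      ultimately show ?thesis by linarith
    qed
  qed
  then show ?thesis unfolding K_def h_def m_def A0_def G_def M_def Kf_def .
qed

end
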